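(* Consider minimizing $f(x)$ subject to $g(x)\in\Theta$, where $\Theta\subset\mathbb{R}^m$ is a nonempty convex polyhedron, $f$ is $\mathcal C^{1,1}$ and $g$ is $\mathcal C^2$ around a feasible $\bar x$, and suppose SOCQ holds at $\bar x$, i.e. there is $\bar y\in N_\Theta(g(\bar x))$ with $\nabla f(\bar x)+\nabla g(\bar x)^*\bar y=0$ and $D^*N_\Theta(g(\bar x),\bar y)(0)\cap\ker\nabla g(\bar x)^*=\{0\}$. Then: (i) if $\bar x$ is a local minimizer, the multiplier $\bar y\in N_\Theta(g(\bar x))$ with $\nabla f(\bar x)+\nabla g(\bar x)^*\bar y=0$ is unique and $\langle z,w\rangle+\langle w,\nabla^2\langle\bar y,g\rangle(\bar x)w\rangle\ge0$ for all $w\in-K_\Gamma(\bar x,-\nabla f(\bar x))$, $z\in\breve\partial^2f(\bar x)(w)$; (ii) if $\bar x$ is a strong local minimizer with modulus $\sigma>0$, then $\bar y$ is unique and $\langle z,w\rangle+\langle w,\nabla^2\langle\bar y,g\rangle(\bar x)w\rangle\ge\sigma\|w\|^2$ for all such $w,z$.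
   Context: $\Gamma:=\{x:g(x)\in\Theta\}$. $D^*N_\Theta(u,y)(w):=\{v:(v,-w)\in N_{\operatorname{gph}N_\Theta}(u,y)\}$ is the limiting coderivative of the normal cone mapping, with $N$ the limiting normal cone (all limits of regular normals $\widehat N_\Omega(z_k)$, $z_k\to\bar z$ in $\Omega$, where $\widehat N_\Omega(\bar z):=\{v:\limsup_{z\to\bar z,z\in\Omega}\langle v,z-\bar z\rangle/\|z-\bar z\|\le0\}$). Tangent cone $T_\Omega(\bar x):=\{w:\exists t_k\downarrow0,w_k\to w,\bar x+t_kw_k\in\Omega\}$; critical cone $K_\Omega(\bar x,\bar v):=T_\Omega(\bar x)\cap\{\bar v\}^\perp$. $\breve\partial^2f(\bar x)(w):=\{z:(z,-w)\in\widehat N_{\operatorname{gph}\nabla f}(\bar x,\nabla f(\bar x))\}$. Strong local minimizer with modulus $\sigma$: $f(x)\ge f(\bar x)+\frac\sigma2\|x-\bar x\|^2$ for feasible $x$ near $\bar x$. *)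

theory Defs
  imports "HOL-Analysis.Analysis"
begin

text \<open>Regular (Frechet) normal cone: v such that limsup of inner v (z - zb) / norm (z - zb)
  over z in Omega tending to zb is at most 0 (written out with epsilon/delta).
  Empty if zb is not in Omega.\<close>
definition regular_normal :: "'a::real_inner set \<Rightarrow> 'a \<Rightarrow> 'a set" where
  "regular_normal \<Omega> zb = {v. zb \<in> \<Omega> \<and>
     (\<forall>e>0. \<exists>d>0. \<forall>z\<in>\<Omega>. norm (z - zb) < d \<longrightarrow> inner v (z - zb) \<le> e * norm (z - zb))}"

definition limiting_normal :: "'a::real_inner set \<Rightarrow> 'a \<Rightarrow> 'a set" where
  "limiting_normal \<Omega> zb = {v. zb \<in> \<Omega> \<and>
     (\<exists>zs vs. (\<forall>k. zs k \<in> \<Omega> \<and> vs k \<in> regular_normal \<Omega> (zs k)) \<and>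
              zs \<longlonglongrightarrow> zb \<and> vs \<longlonglongrightarrow> v)}"

definition normal_graph :: "'a::real_inner set \<Rightarrow> ('a \<times> 'a) set" where
  "normal_graph \<Theta> = {(u, y). y \<in> limiting_normal \<Theta> u}"

definition coderiv_normal :: "'a::real_inner set \<Rightarrow> 'a \<Rightarrow> 'a \<Rightarrow> 'a \<Rightarrow> 'a set" where
  "coderiv_normal \<Theta> u y w = {v. (v, - w) \<in> limiting_normal (normal_graph \<Theta>) (u, y)}"

definition tangent_cone :: "'a::real_normed_vector set \<Rightarrow> 'a \<Rightarrow> 'a set" where
  "tangent_cone \<Omega> xb = {w. \<exists>t ws. (\<forall>k. t k > 0 \<and> xb + t k *\<^sub>R ws k \<in> \<Omega>) \<and>
       t \<longlonglongrightarrow> 0 \<and> ws \<longlonglongrightarrow> w}"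

definition critical_cone :: "'a::real_inner set \<Rightarrow> 'a \<Rightarrow> 'a \<Rightarrow> 'a set" where
  "critical_cone \<Omega> xb vb = tangent_cone \<Omega> xb \<inter> {w. inner vb w = 0}"

text \<open>Regular second-order subdifferential breve-partial^2 f(xb)(w), where the gradient
  mapping nabla f is given by df on its domain D (a neighbourhood of xb).\<close>
definition breve_subdiff2 :: "'a set \<Rightarrow> ('a \<Rightarrow> 'a::real_inner) \<Rightarrow> 'a \<Rightarrow> 'a \<Rightarrow> 'a set" where
  "breve_subdiff2 D df xb w =
     {z. (z, - w) \<in> regular_normal {(x, df x) | x. x \<in> D} (xb, df xb)}"

end

theory Submission
  imports Defs
begin



lemma regn_convex:
  fixes S :: "'a::real_inner set"
  assumes cS: "convex S" and v: "v \<in> regular_normal S zb" and z: "z \<in> S"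
  shows "v \<bullet> (z - zb) \<le> 0"
proof (rule ccontr)
  assume "\<not> ?thesis"
  then have a: "v \<bullet> (z - zb) > 0" by simp
  have zb: "zb \<in> S" using v by (simp add: regular_normal_def)
  have "z \<noteq> zb" using a by auto
  then have n: "norm (z - zb) > 0" by simp
  define e where "e = (v \<bullet> (z - zb)) / (2 * norm (z - zb))"
  have e: "e > 0" using a n by (simp add: e_def)
  obtain d where d: "d > 0" "\<forall>y\<in>S. norm (y - zb) < d \<longrightarrow> v \<bullet> (y - zb) \<le> e * norm (y - zb)"
    using v e by (auto simp: regular_normal_def)
  define t where "t = min 1 (d / (2 * norm (z - zb)))"
  have t: "t > 0" "t \<le> 1" using d n by (auto simp: t_def)
  define p where "p = zb + t *\<^sub>R (z - zb)"
  have "p = (1 - t) *\<^sub>R zb + t *\<^sub>R z" by (simp add: p_def algebra_simps)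
  then have pS: "p \<in> S" using cS zb z t by (simp add: convex_def)
  have np: "norm (p - zb) = t * norm (z - zb)" using t by (simp add: p_def)
  have "t \<le> d / (2 * norm (z - zb))" by (simp add: t_def)
  then have "t * norm (z - zb) \<le> d / (2 * norm (z - zb)) * norm (z - zb)"
    by (rule mult_right_mono) simp
  then have "t * norm (z - zb) \<le> d / 2" using n by simp
  then have "norm (p - zb) < d" using np d by simp
  then have "v \<bullet> (p - zb) \<le> e * norm (p - zb)" using d pS by blast
  then have "t * (v \<bullet> (z - zb)) \<le> e * (t * norm (z - zb))" using np t by (simp add: p_def)
  then have "v \<bullet> (z - zb) \<le> e * norm (z - zb)" using t by (simp add: mult.left_commute)
  also have "\<dots> = v \<bullet> (z - zb) / 2" using n by (simp add: e_def)
  finally show False using a by simp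
qed

lemma limn_convex:
  fixes S :: "'a::real_inner set"
  assumes cS: "convex S" and v: "v \<in> limiting_normal S zb" and z: "z \<in> S"
  shows "v \<bullet> (z - zb) \<le> 0"
proof -
  obtain zs vs where h: "\<forall>k. zs k \<in> S \<and> vs k \<in> regular_normal S (zs k)" "zs \<longlonglongrightarrow> zb" "vs \<longlonglongrightarrow> v"
    using v by (auto simp: limiting_normal_def)
  have "(\<lambda>k. vs k \<bullet> (z - zs k)) \<longlonglongrightarrow> v \<bullet> (z - zb)"
    by (intro tendsto_intros h)
  moreover have "\<forall>k. vs k \<bullet> (z - zs k) \<le> 0" using regn_convex[OF cS] h z by blast
  ultimately show ?thesis by (meson LIMSEQ_le_const2)
qed

lemma convn_regn:
  fixes S :: "'a::real_inner set"
  assumes zb: "zb \<in> S" and v: "\<forall>z\<in>S. v \<bullet> (z - zb) \<le> 0"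
  shows "v \<in> regular_normal S zb"
  unfolding regular_normal_def
proof (safe intro!: zb)
  fix e :: real assume "e > 0"
  show "\<exists>d>0. \<forall>z\<in>S. norm (z - zb) < d \<longrightarrow> v \<bullet> (z - zb) \<le> e * norm (z - zb)"
    by (rule exI[of _ 1]) (use v \<open>e>0\<close> in \<open>auto intro: order_trans[OF _ mult_nonneg_nonneg]\<close>)
qed

lemma convn_limn:
  fixes S :: "'a::real_inner set"
  assumes zb: "zb \<in> S" and v: "\<forall>z\<in>S. v \<bullet> (z - zb) \<le> 0"
  shows "v \<in> limiting_normal S zb"
  unfolding limiting_normal_def mem_Collect_eq
  apply (rule conjI[OF zb])
  apply (rule exI[of _ "\<lambda>_. zb"], rule exI[of _ "\<lambda>_. v"])
  using zb convn_regn[OF zb v] by auto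



lemma limn_iff:
  fixes S :: "'a::real_inner set"
  assumes cS: "convex S"
  shows "y \<in> limiting_normal S u \<longleftrightarrow> u \<in> S \<and> (\<forall>z\<in>S. y \<bullet> (z - u) \<le> 0)"
proof
  assume h: "y \<in> limiting_normal S u"
  have "u \<in> S" using h by (simp add: limiting_normal_def)
  with limn_convex[OF cS h] show "u \<in> S \<and> (\<forall>z\<in>S. y \<bullet> (z - u) \<le> 0)" by blast
next
  assume "u \<in> S \<and> (\<forall>z\<in>S. y \<bullet> (z - u) \<le> 0)"
  then show "y \<in> limiting_normal S u" using convn_limn by blast
qed

lemma graph_regn:
  fixes \<Theta> :: "'a::real_inner set"
  assumes cS: "convex \<Theta>" and y1: "y1 \<in> limiting_normal \<Theta> u'" and y': "y' \<in> limiting_normal \<Theta> u'"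
    and c: "c > 0"
  shows "(c *\<^sub>R (y1 - y'), 0) \<in> regular_normal (normal_graph \<Theta>) (u', y')"
  unfolding regular_normal_def mem_Collect_eq
proof (intro conjI allI impI)
  show "(u', y') \<in> normal_graph \<Theta>" using y' by (simp add: normal_graph_def)
  fix e :: real assume e: "e > 0"
  show "\<exists>d>0. \<forall>p\<in>normal_graph \<Theta>. norm (p - (u', y')) < d \<longrightarrow>
          (c *\<^sub>R (y1 - y'), 0) \<bullet> (p - (u', y')) \<le> e * norm (p - (u', y'))"
  proof (intro exI[of _ "e / c"] conjI ballI impI)
    show "e / c > 0" using e c by simp
    fix p assume p: "p \<in> normal_graph \<Theta>" and np: "norm (p - (u', y')) < e / c"
    obtain u'' y'' where pe: "p = (u'', y'')" by (cases p)
    have y'': "y'' \<in> limiting_normal \<Theta> u''" using p pe by (simp add: normal_graph_def)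
    have u'': "u'' \<in> \<Theta>" and u': "u' \<in> \<Theta>" using y'' y' by (auto simp: limiting_normal_def)
    have i1: "y1 \<bullet> (u'' - u') \<le> 0" using limn_convex[OF cS y1 u''] .
    have i2: "y'' \<bullet> (u' - u'') \<le> 0" using limn_convex[OF cS y'' u'] .
    have n1: "norm (u'' - u') \<le> norm (p - (u', y'))" by (simp add: pe norm_Pair real_sqrt_sum_squares_ge1)
    have n2': "norm (y'' - y') \<le> norm (p - (u', y'))" by (simp add: pe norm_Pair real_sqrt_sum_squares_ge2)
    have n2: "norm (y' - y'') \<le> norm (p - (u', y'))" using n2' by (simp add: norm_minus_commute)
    have "y' \<bullet> (u' - u'') = y'' \<bullet> (u' - u'') + (y' - y'') \<bullet> (u' - u'')"
      by (simp add: inner_diff_left)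
    also have "\<dots> \<le> norm (y' - y'') * norm (u' - u'')"
      using i2 Cauchy_Schwarz_ineq2[of "y' - y''" "u' - u''"] by linarith
    also have "\<dots> \<le> norm (p - (u', y')) * norm (p - (u', y'))"
      using n1 n2 by (simp add: mult_mono' norm_minus_commute)
    also have "\<dots> \<le> (e / c) * norm (p - (u', y'))"
      using np by (intro mult_right_mono) auto
    finally have i3: "y' \<bullet> (u' - u'') \<le> (e / c) * norm (p - (u', y'))" .
    have "(c *\<^sub>R (y1 - y'), 0) \<bullet> (p - (u', y')) = c * (y1 \<bullet> (u'' - u') + y' \<bullet> (u' - u''))"
      by (simp add: pe inner_diff_left inner_diff_right algebra_simps)
    also have "\<dots> \<le> c * ((e / c) * norm (p - (u', y')))"
      using i1 i3 c by (intro mult_left_mono) auto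
    also have "\<dots> = e * norm (p - (u', y'))" using c by simp
    finally show "(c *\<^sub>R (y1 - y'), 0) \<bullet> (p - (u', y')) \<le> e * norm (p - (u', y'))" .
  qed
qed

lemma diff_in_coderiv:
  fixes \<Theta> :: "'a::real_inner set"
  assumes cS: "convex \<Theta>" and yb: "yb \<in> limiting_normal \<Theta> u"
    and y1: "y1 \<in> limiting_normal \<Theta> u" and y2: "y2 \<in> limiting_normal \<Theta> u"
  shows "y1 - y2 \<in> coderiv_normal \<Theta> u yb 0"
proof -
  have uS: "u \<in> \<Theta>" using yb by (simp add: limiting_normal_def)
  have cl: "a + s *\<^sub>R b \<in> limiting_normal \<Theta> u" if "a \<in> limiting_normal \<Theta> u" "b \<in> limiting_normal \<Theta> u" "s \<ge> 0" for a b s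
  proof -
    have "\<forall>z\<in>\<Theta>. (a + s *\<^sub>R b) \<bullet> (z - u) \<le> 0"
      using that limn_convex[OF cS] by (auto simp: inner_add_left intro!: add_nonpos_nonpos mult_nonneg_nonpos)
    then show ?thesis using uS limn_iff[OF cS] by blast
  qed
  define zs where "zs = (\<lambda>k::nat. (u, yb + (1 / real (Suc k)) *\<^sub>R y2))"
  have reg: "zs k \<in> normal_graph \<Theta> \<and> (y1 - y2, 0) \<in> regular_normal (normal_graph \<Theta>) (zs k)" for k
  proof -
    have a: "yb + (1 / real (Suc k)) *\<^sub>R y2 \<in> limiting_normal \<Theta> u" using cl[OF yb y2] by simp
    have b: "yb + (1 / real (Suc k)) *\<^sub>R y1 \<in> limiting_normal \<Theta> u" using cl[OF yb y1] by simp
    have "(real (Suc k) *\<^sub>R ((yb + (1 / real (Suc k)) *\<^sub>R y1) - (yb + (1 / real (Suc k)) *\<^sub>R y2)), 0)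
        \<in> regular_normal (normal_graph \<Theta>) (u, yb + (1 / real (Suc k)) *\<^sub>R y2)"
      by (rule graph_regn[OF cS b a]) simp
    moreover have "real (Suc k) *\<^sub>R ((yb + (1 / real (Suc k)) *\<^sub>R y1) - (yb + (1 / real (Suc k)) *\<^sub>R y2)) = y1 - y2"
      by (simp add: algebra_simps del: of_nat_Suc)
    ultimately show ?thesis using a by (simp add: zs_def normal_graph_def)
  qed
  have "(\<lambda>k. 1 / real (Suc k)) \<longlonglongrightarrow> 0" by (rule LIMSEQ_inverse_real_of_nat[unfolded inverse_eq_divide])
  then have "(\<lambda>k. yb + (1 / real (Suc k)) *\<^sub>R y2) \<longlonglongrightarrow> yb + 0 *\<^sub>R y2"
    by (intro tendsto_intros)
  then have "zs \<longlonglongrightarrow> (u, yb)" unfolding zs_def by (intro tendsto_Pair) auto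
  moreover have "(u, yb) \<in> normal_graph \<Theta>" using yb by (simp add: normal_graph_def)
  ultimately show ?thesis using reg
    unfolding coderiv_normal_def limiting_normal_def mem_Collect_eq
    apply (intro conjI)
     apply simp
    apply (rule exI[of _ zs], rule exI[of _ "\<lambda>_. (y1 - y2, 0)"])
    by simp
qed

lemma span_limn:
  fixes \<Theta> :: "'a::real_inner set"
  assumes cS: "convex \<Theta>" and uS: "u \<in> \<Theta>" and y: "y \<in> span (limiting_normal \<Theta> u)"
  shows "\<exists>y1\<in>limiting_normal \<Theta> u. \<exists>y2\<in>limiting_normal \<Theta> u. y = y1 - y2"
  using y
proof (induct rule: span_induct_alt)
  case base
  have "0 \<in> limiting_normal \<Theta> u" using uS limn_iff[OF cS] by simp
  then show ?case by force
next
  case (step c x y)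
  obtain y1 y2 where yy: "y1 \<in> limiting_normal \<Theta> u" "y2 \<in> limiting_normal \<Theta> u" "y = y1 - y2"
    using step by blast
  have cl: "a + s *\<^sub>R b \<in> limiting_normal \<Theta> u" if "a \<in> limiting_normal \<Theta> u" "b \<in> limiting_normal \<Theta> u" "s \<ge> 0" for a b s
  proof -
    have "\<forall>z\<in>\<Theta>. (a + s *\<^sub>R b) \<bullet> (z - u) \<le> 0"
      using that limn_convex[OF cS] by (auto simp: inner_add_left intro!: add_nonpos_nonpos mult_nonneg_nonpos)
    then show ?thesis using uS limn_iff[OF cS] by blast
  qed
  show ?case
  proof (cases "c \<ge> 0")
    case True
    have "y1 + c *\<^sub>R x \<in> limiting_normal \<Theta> u" using cl yy step True by blast
    moreover have "c *\<^sub>R x + y = (y1 + c *\<^sub>R x) - y2" using yy by simp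
    ultimately show ?thesis using yy by blast
  next
    case False
    have "y2 + (- c) *\<^sub>R x \<in> limiting_normal \<Theta> u" using cl[of y2 x "-c"] yy step False by simp
    moreover have "c *\<^sub>R x + y = y1 - (y2 + (- c) *\<^sub>R x)" using yy by simp
    ultimately show ?thesis using yy by blast
  qed
qed



lemma cq_surj:
  fixes A :: "'a::euclidean_space \<Rightarrow> 'b::euclidean_space" and C :: "'b set"
  assumes lA: "linear A" and cq: "\<And>y. y \<in> span C \<Longrightarrow> adjoint A y = 0 \<Longrightarrow> y = 0"
  shows "\<exists>h s. (\<forall>y\<in>C. y \<bullet> s = 0) \<and> A h - s = q"
proof (rule ccontr)
  assume nq: "\<not> ?thesis"
  define W where "W = {A h - s | h s. \<forall>y\<in>C. y \<bullet> s = 0}"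
  have sW: "subspace W" unfolding subspace_def W_def
  proof (intro conjI allI ballI impI)
    show "0 \<in> {A h - s |h s. \<forall>y\<in>C. y \<bullet> s = 0}"
      by (rule CollectI, rule exI[of _ 0], rule exI[of _ 0]) (simp add: linear_0[OF lA])
  next
    fix x y assume "x \<in> {A h - s |h s. \<forall>y\<in>C. y \<bullet> s = 0}" "y \<in> {A h - s |h s. \<forall>y\<in>C. y \<bullet> s = 0}"
    then obtain h1 s1 h2 s2 where "x = A h1 - s1" "\<forall>y\<in>C. y \<bullet> s1 = 0" "y = A h2 - s2" "\<forall>y\<in>C. y \<bullet> s2 = 0" by blast
    then show "x + y \<in> {A h - s |h s. \<forall>y\<in>C. y \<bullet> s = 0}"
      by (intro CollectI exI[of _ "h1 + h2"] exI[of _ "s1 + s2"])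
         (simp add: linear_add[OF lA] inner_add_right algebra_simps)
  next
    fix c :: real and x assume "x \<in> {A h - s |h s. \<forall>y\<in>C. y \<bullet> s = 0}"
    then obtain h1 s1 where "x = A h1 - s1" "\<forall>y\<in>C. y \<bullet> s1 = 0" by blast
    then show "c *\<^sub>R x \<in> {A h - s |h s. \<forall>y\<in>C. y \<bullet> s = 0}"
      by (intro CollectI exI[of _ "c *\<^sub>R h1"] exI[of _ "c *\<^sub>R s1"])
         (simp add: linear_scale[OF lA] scaleR_diff_right)
  qed
  have qW: "q \<notin> W" using nq unfolding W_def by blast
  obtain y z where yz: "y \<in> span W" "\<And>w. w \<in> span W \<Longrightarrow> orthogonal z w" "q = y + z"
    using orthogonal_subspace_decomp_exists by blast
  have spW: "span W = W" using sW by (simp add: span_eq_iff)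
  have z0: "z \<noteq> 0" using yz qW spW by auto
  have zW: "z \<bullet> w = 0" if "w \<in> W" for w using yz(2)[of w] that spW by (simp add: orthogonal_def)
  have zA: "z \<bullet> A h = 0" for h
  proof -
    have "A h - 0 \<in> W" unfolding W_def
      by (rule CollectI, rule exI[of _ h], rule exI[of _ 0]) simp
    then show ?thesis using zW by simp
  qed
  have adj: "adjoint A z = 0"
  proof -
    have "adjoint A z \<bullet> adjoint A z = z \<bullet> A (adjoint A z)"
      by (simp add: adjoint_clauses[OF lA] inner_commute)
    then show ?thesis using zA by simp
  qed
  have zT: "z \<bullet> s = 0" if "\<forall>y\<in>C. y \<bullet> s = 0" for s
  proof -
    have "A 0 - s \<in> W" unfolding W_def using that by blast
    then have "z \<bullet> (A 0 - s) = 0" by (rule zW)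
    then show ?thesis by (simp add: linear_0[OF lA])
  qed
  obtain p r where pr: "p \<in> span C" "\<And>w. w \<in> span C \<Longrightarrow> orthogonal r w" "z = p + r"
    using orthogonal_subspace_decomp_exists by blast
  have rT: "\<forall>y\<in>C. y \<bullet> r = 0"
    using pr(2) span_base by (force simp: orthogonal_def inner_commute)
  have "z \<bullet> r = 0" using zT rT by blast
  moreover have "p \<bullet> r = 0" using pr(2)[OF pr(1)] by (simp add: orthogonal_def inner_commute)
  ultimately have "r \<bullet> r = 0" using pr(3) by (simp add: inner_add_left)
  then have "r = 0" by simp
  then have "z \<in> span C" using pr by simp
  then have "z = 0" using cq adj by blast
  then show False using z0 by simp
qed

lemma cq_rinv:
  fixes A :: "'a::euclidean_space \<Rightarrow> 'b::euclidean_space" and C :: "'b set"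
  assumes lA: "linear A" and cq: "\<And>y. y \<in> span C \<Longrightarrow> adjoint A y = 0 \<Longrightarrow> y = 0"
  obtains B1 :: "'b \<Rightarrow> 'a" and B2 :: "'b \<Rightarrow> 'b"
  where "linear B1" "linear B2" "\<And>q. A (B1 q) - B2 q = q" "\<And>q y. y \<in> C \<Longrightarrow> y \<bullet> B2 q = 0"
proof -
  have "\<forall>q. \<exists>hs. (\<forall>y\<in>C. y \<bullet> snd hs = 0) \<and> A (fst hs) - snd hs = q"
    using cq_surj[OF lA cq] by fastforce
  then obtain H where H: "\<And>q. (\<forall>y\<in>C. y \<bullet> snd (H q) = 0) \<and> A (fst (H q)) - snd (H q) = q"
    by metis
  define B1 where "B1 = (\<lambda>q. \<Sum>i\<in>Basis. (q \<bullet> i) *\<^sub>R fst (H i))"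
  define B2 where "B2 = (\<lambda>q. \<Sum>i\<in>Basis. (q \<bullet> i) *\<^sub>R snd (H i))"
  have l1: "linear B1"
    by (rule linearI) (simp_all add: B1_def inner_add_left scaleR_add_left sum.distrib scaleR_sum_right)
  have l2: "linear B2"
    by (rule linearI) (simp_all add: B2_def inner_add_left scaleR_add_left sum.distrib scaleR_sum_right)
  have "A (B1 q) - B2 q = (\<Sum>i\<in>Basis. (q \<bullet> i) *\<^sub>R (A (fst (H i)) - snd (H i)))" for q
    by (simp add: B1_def B2_def linear_sum[OF lA] linear_scale[OF lA] sum_subtractf scaleR_diff_right)
  also have "\<dots> q = q" for q using H by (simp add: euclidean_representation)
  finally have e: "\<And>q. A (B1 q) - B2 q = q" .
  have o: "y \<bullet> B2 q = 0" if "y \<in> C" for y q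
    using H that by (simp add: B2_def inner_sum_right)
  show ?thesis using that l1 l2 e o by blast
qed



lemma arc_lemma:
  fixes g :: "'a::euclidean_space \<Rightarrow> 'b::euclidean_space" and A :: "'a \<Rightarrow> 'b"
    and B1 :: "'b \<Rightarrow> 'a" and B2 :: "'b \<Rightarrow> 'b"
  assumes gd: "(g has_derivative A) (at xb)" and r0: "r0 > 0" and gc: "continuous_on (ball xb r0) g"
    and lB1: "linear B1" and lB2: "linear B2" and inv: "\<And>q. A (B1 q) - B2 q = q"
    and e: "\<epsilon> > 0"
  shows "\<exists>\<tau>>0. \<forall>t. 0 < t \<and> t < \<tau> \<longrightarrow> (\<exists>r q. norm r \<le> \<epsilon> * t \<and> g (xb + t *\<^sub>R d + r) - g xb - t *\<^sub>R A d = B2 q)"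
proof -
  have blA: "bounded_linear A" using gd by (rule has_derivative_bounded_linear)
  have blB1: "bounded_linear B1" using lB1 by (simp add: linear_conv_bounded_linear)
  have blB2: "bounded_linear B2" using lB2 by (simp add: linear_conv_bounded_linear)
  obtain \<beta> where \<beta>: "\<beta> > 0" "\<And>q. norm (B1 q) \<le> norm q * \<beta>"
    using bounded_linear.pos_bounded[OF blB1] by blast
  define e' where "e' = \<epsilon> / \<beta>"
  have e': "e' > 0" using e \<beta> by (simp add: e'_def)
  define M where "M = norm d + \<epsilon> + 1"
  have M: "M > 0" "M \<ge> 1" using e norm_ge_zero[of d] unfolding M_def by linarith+
  define \<eta> where "\<eta> = e' / M"
  have \<eta>: "\<eta> > 0" using e' M by (simp add: \<eta>_def)
  obtain \<delta>1 where \<delta>1: "\<delta>1 > 0" "\<And>y. norm (y - xb) < \<delta>1 \<Longrightarrow> norm (g y - g xb - A (y - xb)) \<le> \<eta> * norm (y - xb)"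
    using gd \<eta> unfolding has_derivative_within_alt by blast
  define \<tau> where "\<tau> = min \<delta>1 r0 / M"
  have \<tau>: "\<tau> > 0" using \<delta>1 r0 M by (simp add: \<tau>_def)
  show ?thesis
  proof (intro exI[of _ \<tau>] conjI allI impI)
    show "\<tau> > 0" by fact
    fix t :: real assume t: "0 < t \<and> t < \<tau>"
    define \<rho> where "\<rho> = e' * t"
    have \<rho>: "\<rho> > 0" using e' t by (simp add: \<rho>_def)
    have hb: "norm (t *\<^sub>R d + B1 y) \<le> t * (norm d + \<epsilon>)" if "y \<in> cball 0 \<rho>" for y
    proof -
      have "norm (B1 y) \<le> norm y * \<beta>" by (rule \<beta>(2))
      also have "\<dots> \<le> \<rho> * \<beta>" using that \<beta> by (intro mult_right_mono) auto
      also have "\<dots> = \<epsilon> * t" using \<beta> by (simp add: \<rho>_def e'_def)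
      finally have "norm (B1 y) \<le> \<epsilon> * t" .
      then show ?thesis using t norm_triangle_ineq[of "t *\<^sub>R d" "B1 y"]
        by (simp add: algebra_simps)
    qed
    have tM: "t * M < min \<delta>1 r0" using t M by (simp add: \<tau>_def pos_less_divide_eq)
    have hs: "norm (t *\<^sub>R d + B1 y) < min \<delta>1 r0" if "y \<in> cball 0 \<rho>" for y
    proof -
      have "t * (norm d + \<epsilon>) < t * M" using t by (simp add: M_def)
      then show ?thesis using hb[OF that] tM by linarith
    qed
    define F where "F = (\<lambda>y. g (xb + t *\<^sub>R d + B1 y) - g xb - t *\<^sub>R A d - B2 y)"
    have cF: "continuous_on (cball 0 \<rho>) F"
    proof -
      have c1: "continuous_on (cball 0 \<rho>) (\<lambda>y. xb + t *\<^sub>R d + B1 y)"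
        by (intro continuous_intros linear_continuous_on blB1)
      have "(\<lambda>y. xb + t *\<^sub>R d + B1 y) ` cball 0 \<rho> \<subseteq> ball xb r0"
      proof
        fix p assume "p \<in> (\<lambda>y. xb + t *\<^sub>R d + B1 y) ` cball 0 \<rho>"
        then obtain y where y: "y \<in> cball 0 \<rho>" "p = xb + t *\<^sub>R d + B1 y" by blast
        have "dist xb p = norm (t *\<^sub>R d + B1 y)" 
        proof -
          have "xb - p = - (t *\<^sub>R d + B1 y)" using y(2) by simp
          then show ?thesis by (simp only: dist_norm norm_minus_cancel)
        qed
        then show "p \<in> ball xb r0" using hs[OF y(1)] by simp
      qed
      then have "continuous_on (cball 0 \<rho>) (\<lambda>y. g (xb + t *\<^sub>R d + B1 y))"
        using continuous_on_compose2[OF gc c1] by blast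
      moreover have "continuous_on (cball 0 \<rho>) B2" by (rule linear_continuous_on[OF blB2])
      ultimately show ?thesis unfolding F_def
        by (intro continuous_on_diff continuous_on_const)
    qed
    have key: "0 + (y - F y) \<in> cball 0 \<rho>" if y: "y \<in> cball 0 \<rho>" for y
    proof -
      define h where "h = t *\<^sub>R d + B1 y"
      have Ah: "A h = t *\<^sub>R A d + A (B1 y)" unfolding h_def
        using bounded_linear.linear[OF blA] by (simp add: linear_add linear_scale)
      have Fy: "F y = g (xb + h) - g xb - t *\<^sub>R A d - B2 y" by (simp add: F_def h_def add.assoc)
      have "B2 y = A (B1 y) - y" using inv[of y] by (simp add: algebra_simps)
      then have "y - F y = - (g (xb + h) - g xb - A h)"
        unfolding Fy Ah by (simp add: algebra_simps)
      then have "norm (y - F y) = norm (g (xb + h) - g xb - A ((xb + h) - xb))"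
        by (simp only: norm_minus_cancel add_diff_cancel_left')
      also have "\<dots> \<le> \<eta> * norm ((xb + h) - xb)"
        using \<delta>1(2)[of "xb + h"] hs[OF y] by (simp add: h_def)
      also have "\<dots> \<le> \<eta> * (t * (norm d + \<epsilon>))"
        using hb[OF y] \<eta> by (intro mult_left_mono) (auto simp: h_def)
      also have "\<dots> \<le> \<eta> * (t * M)"
        using \<eta> t by (intro mult_left_mono) (auto simp: M_def)
      also have "\<dots> = \<rho>" using M by (simp add: \<eta>_def \<rho>_def)
      finally show ?thesis by (simp add: dist_norm norm_minus_commute)
    qed
    obtain y where y: "y \<in> cball 0 \<rho>" "F y = 0"
      using brouwer_surjective_cball[OF cF \<rho>, of 0 "{0}"] key by auto
    have "norm (B1 y) \<le> \<epsilon> * t"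
    proof -
      have "norm (B1 y) \<le> norm y * \<beta>" by (rule \<beta>(2))
      also have "\<dots> \<le> \<rho> * \<beta>" using y \<beta> by (intro mult_right_mono) auto
      also have "\<dots> = \<epsilon> * t" using \<beta> by (simp add: \<rho>_def e'_def)
      finally show ?thesis .
    qed
    moreover have "g (xb + t *\<^sub>R d + B1 y) - g xb - t *\<^sub>R A d = B2 y"
      using y(2) by (simp add: F_def)
    ultimately show "\<exists>r q. norm r \<le> \<epsilon> * t \<and> g (xb + t *\<^sub>R d + r) - g xb - t *\<^sub>R A d = B2 q"
      by blast
  qed
qed



lemma taylor_bound:
  fixes \<phi> \<phi>' :: "real \<Rightarrow> real"
  assumes d: "\<And>s. 0 \<le> s \<Longrightarrow> s \<le> 1 \<Longrightarrow> (\<phi> has_real_derivative \<phi>' s) (at s)"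
    and b: "\<And>s. 0 \<le> s \<Longrightarrow> s \<le> 1 \<Longrightarrow> \<phi>' s - \<phi>' 0 \<le> s * M"
  shows "\<phi> 1 - \<phi> 0 \<le> \<phi>' 0 + M / 2"
proof -
  define ch where "ch = (\<lambda>s. \<phi> s - s * \<phi>' 0 - s^2 * M / 2)"
  have "ch 0 \<ge> ch 1"
  proof (rule DERIV_nonpos_imp_nonincreasing[of 0 1 ch])
    fix s :: real assume s: "0 \<le> s" "s \<le> 1"
    have "(ch has_real_derivative (\<phi>' s - \<phi>' 0 - s * M)) (at s)"
      unfolding ch_def using d[OF s] by (auto intro!: derivative_eq_intros)
    then show "\<exists>y. (ch has_real_derivative y) (at s) \<and> y \<le> 0" using b[OF s] by force
  qed simp
  then show ?thesis by (simp add: ch_def)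
qed



lemma norm_pair_le:
  fixes a :: "'a::real_normed_vector" and b :: "'b::real_normed_vector"
  shows "norm (a, b) \<le> norm a + norm b"
using sqrt_sum_squares_le_sum_abs[of "norm a" "norm b"] by (simp add: norm_Pair)

lemma f_part:
  fixes df :: "'a::euclidean_space \<Rightarrow> 'a"
  assumes Lip: "\<And>x x'. x \<in> U \<Longrightarrow> x' \<in> U \<Longrightarrow> norm (df x - df x') \<le> L * dist x x'"
    and L: "L \<ge> 0" and xb: "xb \<in> U" and xu: "xb + u \<in> U"
    and reg: "\<forall>p\<in>{(x, df x) |x. x \<in> U}. norm (p - (xb, df xb)) < d1 \<longrightarrow>
                 (z, - w) \<bullet> (p - (xb, df xb)) \<le> \<epsilon> * norm (p - (xb, df xb))"
    and nu: "(1 + L) * norm u < d1" and e: "\<epsilon> > 0"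
    and u: "u = (s * tk) *\<^sub>R dk" and s: "s \<ge> 0" and tk: "tk > 0"
  shows "(df (xb + u) - df xb) \<bullet> (tk *\<^sub>R dk) \<le>
           s * (tk^2 * (- (z \<bullet> dk) + \<epsilon> * (1 + L) * norm dk + L * norm (dk + w) * norm dk))"
proof -
  define Aa where "Aa = df (xb + u) - df xb"
  have nA: "norm Aa \<le> L * norm u" using Lip[OF xu xb] by (simp add: Aa_def dist_norm)
  have pG: "(xb + u, df (xb + u)) \<in> {(x, df x) |x. x \<in> U}" using xu by blast
  have pd: "(xb + u, df (xb + u)) - (xb, df xb) = (u, Aa)" by (simp add: Aa_def)
  have np: "norm (u, Aa) \<le> (1 + L) * norm u" using norm_pair_le[of u Aa] nA by (simp add: algebra_simps)
  have "norm ((xb + u, df (xb + u)) - (xb, df xb)) < d1" unfolding pd using np nu by linarith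
  then have "(z, - w) \<bullet> ((xb + u, df (xb + u)) - (xb, df xb)) \<le> \<epsilon> * norm ((xb + u, df (xb + u)) - (xb, df xb))"
    using reg pG by blast
  then have "(z, - w) \<bullet> (u, Aa) \<le> \<epsilon> * norm (u, Aa)" unfolding pd .
  also have "\<dots> \<le> \<epsilon> * ((1 + L) * norm u)" using np e by (intro mult_left_mono) auto
  finally have i1: "z \<bullet> u - w \<bullet> Aa \<le> \<epsilon> * ((1 + L) * norm u)" by simp
  have i2: "Aa \<bullet> (dk + w) \<le> L * norm u * norm (dk + w)"
  proof -
    have "Aa \<bullet> (dk + w) \<le> norm Aa * norm (dk + w)" by (rule norm_cauchy_schwarz)
    also have "\<dots> \<le> L * norm u * norm (dk + w)" using nA by (intro mult_right_mono) auto
    finally show ?thesis .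
  qed
  have "Aa \<bullet> (tk *\<^sub>R dk) = tk * (Aa \<bullet> (dk + w) - w \<bullet> Aa)"
    by (simp add: inner_add_right inner_commute)
  also have "\<dots> \<le> tk * (L * norm u * norm (dk + w) + \<epsilon> * ((1 + L) * norm u) - z \<bullet> u)"
    using i1 i2 tk by (intro mult_left_mono) auto
  also have "\<dots> = s * (tk^2 * (- (z \<bullet> dk) + \<epsilon> * (1 + L) * norm dk + L * norm (dk + w) * norm dk))"
    using s tk by (simp add: u power2_eq_square algebra_simps)
  finally show ?thesis by (simp add: Aa_def)
qed

lemma g_part:
  fixes dg :: "'a::euclidean_space \<Rightarrow> 'a \<Rightarrow>\<^sub>L 'b::euclidean_space"
    and ddg :: "'a \<Rightarrow> 'a \<Rightarrow>\<^sub>L ('a \<Rightarrow>\<^sub>L 'b)"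
  assumes dgb: "norm (dg (xb + u) - dg xb - ddg xb u) \<le> \<epsilon> * norm u"
    and u: "u = (s * tk) *\<^sub>R dk" and s: "s \<ge> 0" and tk: "tk > 0" and e: "\<epsilon> > 0"
  shows "yb \<bullet> ((dg (xb + u) - dg xb) (tk *\<^sub>R dk)) \<le>
           s * (tk^2 * (yb \<bullet> (ddg xb dk dk) + norm yb * \<epsilon> * (norm dk)^2))"
proof -
  define R where "R = dg (xb + u) - dg xb - ddg xb u"
  have split: "(dg (xb + u) - dg xb) (tk *\<^sub>R dk) = ddg xb u (tk *\<^sub>R dk) + R (tk *\<^sub>R dk)"
    by (simp add: R_def blinfun.diff_left)
  have q: "ddg xb u (tk *\<^sub>R dk) = (s * tk * tk) *\<^sub>R ddg xb dk dk"
    by (simp add: u blinfun.scaleR_left blinfun.scaleR_right)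
  have "yb \<bullet> R (tk *\<^sub>R dk) \<le> norm yb * norm (R (tk *\<^sub>R dk))" by (rule norm_cauchy_schwarz)
  also have "\<dots> \<le> norm yb * (norm R * norm (tk *\<^sub>R dk))"
    by (intro mult_left_mono norm_blinfun) auto
  also have "\<dots> \<le> norm yb * ((\<epsilon> * norm u) * norm (tk *\<^sub>R dk))"
    using dgb by (intro mult_left_mono mult_right_mono) (auto simp: R_def)
  also have "\<dots> = s * (tk^2 * (norm yb * \<epsilon> * (norm dk)^2))"
    using s tk by (simp add: u power2_eq_square algebra_simps)
  finally have "yb \<bullet> R (tk *\<^sub>R dk) \<le> s * (tk^2 * (norm yb * \<epsilon> * (norm dk)^2))" .
  then show ?thesis
    unfolding split q inner_add_right by (simp add: power2_eq_square algebra_simps)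
qed



lemma so_core:
  fixes f :: "'a::euclidean_space \<Rightarrow> real" and df :: "'a \<Rightarrow> 'a"
    and g :: "'a \<Rightarrow> 'b::euclidean_space" and dg :: "'a \<Rightarrow> 'a \<Rightarrow>\<^sub>L 'b"
    and ddg :: "'a \<Rightarrow> 'a \<Rightarrow>\<^sub>L ('a \<Rightarrow>\<^sub>L 'b)"
    and t :: "nat \<Rightarrow> real" and ds :: "nat \<Rightarrow> 'a"
  assumes U: "open U" "xb \<in> U" and f_deriv: "\<forall>x\<in>U. (f has_derivative (\<lambda>h. df x \<bullet> h)) (at x)"
    and Lip: "\<And>x x'. x \<in> U \<Longrightarrow> x' \<in> U \<Longrightarrow> norm (df x - df x') \<le> L * dist x x'" and L: "L \<ge> 0"
    and V: "open V" "xb \<in> V" and g_deriv: "\<forall>x\<in>V. (g has_derivative blinfun_apply (dg x)) (at x)"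
    and dgd: "(dg has_derivative blinfun_apply (ddg xb)) (at xb)"
    and KKT': "\<And>h. df xb \<bullet> h + yb \<bullet> dg xb h = 0"
    and zc: "(z, - w) \<in> regular_normal {(x, df x) | x. x \<in> U} (xb, df xb)"
    and tpos: "\<And>k. t k > 0" and t0: "t \<longlonglongrightarrow> 0" and ds: "ds \<longlonglongrightarrow> - w"
    and grow: "eventually (\<lambda>k. f (xb + t k *\<^sub>R ds k) + yb \<bullet> g (xb + t k *\<^sub>R ds k) - f xb - yb \<bullet> g xb
                   \<ge> \<sigma> / 2 * (t k)^2 * (norm (ds k))^2) sequentially"
  shows "\<sigma> * (norm w)^2 \<le> z \<bullet> w + yb \<bullet> (ddg xb w w)"
proof -
  define Q where "Q = z \<bullet> w + yb \<bullet> (ddg xb w w)"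
  define K where "K = (1 + L) * norm w + norm yb * (norm w)^2"
  have K: "K \<ge> 0" using L by (simp add: K_def)
  have main: "\<sigma> * (norm w)^2 \<le> Q + \<epsilon> * K" if e: "\<epsilon> > 0" for \<epsilon>
  proof -
    obtain d1 where d1: "d1 > 0" "\<forall>p\<in>{(x, df x) |x. x \<in> U}. norm (p - (xb, df xb)) < d1 \<longrightarrow>
                 (z, - w) \<bullet> (p - (xb, df xb)) \<le> \<epsilon> * norm (p - (xb, df xb))"
      using zc e unfolding regular_normal_def by blast
    obtain d2 where d2: "d2 > 0" "\<And>y. norm (y - xb) < d2 \<Longrightarrow> norm (dg y - dg xb - ddg xb (y - xb)) \<le> \<epsilon> * norm (y - xb)"
      using dgd e unfolding has_derivative_within_alt by blast
    obtain r where r: "r > 0" "ball xb r \<subseteq> U \<inter> V"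
      using open_Int[OF U(1) V(1)] U(2) V(2) by (meson IntI open_contains_ball)
    define \<rho> where "\<rho> = min r (min (d1 / (1 + L)) d2)"
    have \<rho>: "\<rho> > 0" using r d1 d2 L by (simp add: \<rho>_def)
    define c where "c = (\<lambda>d. - (z \<bullet> d) + \<epsilon> * (1 + L) * norm d + L * norm (d + w) * norm d
                         + (yb \<bullet> (ddg xb d d) + norm yb * \<epsilon> * (norm d)^2))"
    have "(\<lambda>k. norm (t k *\<^sub>R ds k)) \<longlonglongrightarrow> norm (0 *\<^sub>R (- w))"
      by (intro tendsto_intros t0 ds)
    then have ev1: "eventually (\<lambda>k. norm (t k *\<^sub>R ds k) < \<rho>) sequentially"
      using \<rho> by (auto dest: order_tendstoD(2))
    have ev: "eventually (\<lambda>k. \<sigma> * (norm (ds k))^2 \<le> c (ds k)) sequentially"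
      using ev1 grow
    proof eventually_elim
      case (elim k)
      define tk where "tk = t k"
      define dk where "dk = ds k"
      define h where "h = tk *\<^sub>R dk"
      have tk: "tk > 0" using tpos by (simp add: tk_def)
      have nh: "norm h < \<rho>" using elim by (simp add: h_def tk_def dk_def)
      define \<Phi> where "\<Phi> = (\<lambda>s. f (xb + s *\<^sub>R h) + yb \<bullet> g (xb + s *\<^sub>R h))"
      define \<Phi>' where "\<Phi>' = (\<lambda>s. df (xb + s *\<^sub>R h) \<bullet> h + yb \<bullet> dg (xb + s *\<^sub>R h) h)"
      have inball: "xb + s *\<^sub>R h \<in> U \<and> xb + s *\<^sub>R h \<in> V \<and> norm (s *\<^sub>R h) < \<rho>" if s: "0 \<le> s" "s \<le> 1" for s
      proof -
        have "norm (s *\<^sub>R h) \<le> norm h" using s by (simp add: mult_left_le_one_le)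
        then have "norm (s *\<^sub>R h) < \<rho>" using nh by linarith
        then have "xb + s *\<^sub>R h \<in> ball xb r" using \<rho>_def by (simp add: dist_norm)
        then show ?thesis using r \<open>norm (s *\<^sub>R h) < \<rho>\<close> by auto
      qed
      have deriv: "(\<Phi> has_real_derivative \<Phi>' s) (at s)" if s: "0 \<le> s" "s \<le> 1" for s
      proof -
        have xU: "xb + s *\<^sub>R h \<in> U" and xV: "xb + s *\<^sub>R h \<in> V" using inball[OF s] by auto
        have l: "((\<lambda>s. xb + s *\<^sub>R h) has_derivative (\<lambda>r. r *\<^sub>R h)) (at s)"
          by (auto intro!: derivative_eq_intros)
        have fd: "((\<lambda>s. f (xb + s *\<^sub>R h)) has_derivative (\<lambda>r. df (xb + s *\<^sub>R h) \<bullet> (r *\<^sub>R h))) (at s)"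
          using has_derivative_compose[OF l] f_deriv xU by blast
        have gd: "((\<lambda>s. g (xb + s *\<^sub>R h)) has_derivative (\<lambda>r. dg (xb + s *\<^sub>R h) (r *\<^sub>R h))) (at s)"
          using has_derivative_compose[OF l] g_deriv xV by blast
        have gd2: "((\<lambda>s. yb \<bullet> g (xb + s *\<^sub>R h)) has_derivative (\<lambda>r. yb \<bullet> dg (xb + s *\<^sub>R h) (r *\<^sub>R h))) (at s)"
          by (rule has_derivative_inner_right[OF gd])
        have "(\<Phi> has_derivative (\<lambda>r. df (xb + s *\<^sub>R h) \<bullet> (r *\<^sub>R h) + yb \<bullet> dg (xb + s *\<^sub>R h) (r *\<^sub>R h))) (at s)"
          unfolding \<Phi>_def by (rule has_derivative_add[OF fd gd2])
        moreover have "(\<lambda>r. df (xb + s *\<^sub>R h) \<bullet> (r *\<^sub>R h) + yb \<bullet> dg (xb + s *\<^sub>R h) (r *\<^sub>R h)) = (\<lambda>r. \<Phi>' s * r)"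
          by (auto simp: \<Phi>'_def blinfun.scaleR_right algebra_simps)
        ultimately show ?thesis by (simp add: has_field_derivative_def)
      qed
      have bound: "\<Phi>' s - \<Phi>' 0 \<le> s * (tk^2 * c dk)" if s: "0 \<le> s" "s \<le> 1" for s
      proof -
        define u where "u = (s * tk) *\<^sub>R dk"
        have us: "s *\<^sub>R h = u" by (simp add: u_def h_def)
        have ib: "xb + u \<in> U" "norm u < \<rho>" using inball[OF s] us by auto
        have nu: "(1 + L) * norm u < d1"
        proof -
          have "norm u < d1 / (1 + L)" using ib \<rho>_def by simp
          then show ?thesis using L by (simp add: pos_less_divide_eq mult.commute)
        qed
        have dgb: "norm (dg (xb + u) - dg xb - ddg xb u) \<le> \<epsilon> * norm u"
          using d2(2)[of "xb + u"] ib \<rho>_def by simp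
        have fp: "(df (xb + u) - df xb) \<bullet> h \<le>
           s * (tk^2 * (- (z \<bullet> dk) + \<epsilon> * (1 + L) * norm dk + L * norm (dk + w) * norm dk))"
          unfolding h_def by (rule f_part[OF Lip L U(2) ib(1) d1(2) nu e u_def s(1) tk])
        have gp: "yb \<bullet> ((dg (xb + u) - dg xb) h) \<le>
           s * (tk^2 * (yb \<bullet> (ddg xb dk dk) + norm yb * \<epsilon> * (norm dk)^2))"
          unfolding h_def by (rule g_part[where dg=dg and ddg=ddg and xb=xb, OF dgb u_def s(1) tk e])
        have "\<Phi>' s - \<Phi>' 0 = (df (xb + u) - df xb) \<bullet> h + yb \<bullet> ((dg (xb + u) - dg xb) h)"
          by (simp add: \<Phi>'_def us inner_diff_left inner_diff_right blinfun.diff_left)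
        also have "\<dots> \<le> s * (tk^2 * c dk)" using fp gp by (simp add: c_def algebra_simps)
        finally show ?thesis .
      qed
      have tb: "\<Phi> 1 - \<Phi> 0 \<le> \<Phi>' 0 + tk^2 * c dk / 2"
        by (rule taylor_bound[OF deriv bound])
      have "\<Phi>' 0 = 0" using KKT'[of h] by (simp add: \<Phi>'_def)
      moreover have "\<Phi> 1 - \<Phi> 0 \<ge> \<sigma> / 2 * tk^2 * (norm dk)^2"
        using elim by (simp add: \<Phi>_def h_def tk_def dk_def)
      ultimately have "\<sigma> / 2 * tk^2 * (norm dk)^2 \<le> tk^2 * c dk / 2" using tb by linarith
      then have "tk^2 * (\<sigma> * (norm dk)^2) \<le> tk^2 * c dk" by (simp add: algebra_simps)
      then show ?case using tk by (simp add: dk_def)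
    qed
    have l1: "(\<lambda>k. \<sigma> * (norm (ds k))^2) \<longlonglongrightarrow> \<sigma> * (norm (- w))^2"
      by (intro tendsto_intros ds)
    have l2: "(\<lambda>k. c (ds k)) \<longlonglongrightarrow> c (- w)"
      unfolding c_def by (intro tendsto_intros ds)
    have "\<sigma> * (norm (- w))^2 \<le> c (- w)"
      using tendsto_le[OF trivial_limit_sequentially l2 l1 ev] .
    moreover have "c (- w) = Q + \<epsilon> * K"
      by (simp add: c_def Q_def K_def blinfun.minus_left blinfun.minus_right algebra_simps)
    ultimately show ?thesis by simp
  qed
  have "\<sigma> * (norm w)^2 \<le> Q"
  proof (rule field_le_epsilon)
    fix e :: real assume e: "e > 0"
    have "e / (K + 1) > 0" using e K by simp
    then have "\<sigma> * (norm w)^2 \<le> Q + (e / (K + 1)) * K" by (rule main)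
    also have "(e / (K + 1)) * K \<le> e" using e K by (simp add: divide_le_eq field_simps)
    finally show "\<sigma> * (norm w)^2 \<le> Q + e" by simp
  qed
  then show ?thesis by (simp add: Q_def)
qed



lemma seq_deriv:
  fixes g :: "'a::euclidean_space \<Rightarrow> 'b::real_normed_vector"
  assumes gd: "(g has_derivative A) (at xb)" and tpos: "\<And>k. t k > 0" and t0: "t \<longlonglongrightarrow> 0"
    and ws: "ws \<longlonglongrightarrow> d"
  shows "(\<lambda>k. (g (xb + t k *\<^sub>R ws k) - g xb) /\<^sub>R t k) \<longlonglongrightarrow> A d"
proof -
  have blA: "bounded_linear A" using gd by (rule has_derivative_bounded_linear)
  have "(\<lambda>k. (g (xb + t k *\<^sub>R ws k) - g xb) /\<^sub>R t k - A (ws k)) \<longlonglongrightarrow> 0"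
  proof (rule LIMSEQ_I)
    fix r :: real assume r: "r > 0"
    define \<epsilon> where "\<epsilon> = r / (2 * (norm d + 1))"
    have pd: "norm d + 1 > 0" using norm_ge_zero[of d] by linarith
    have e: "\<epsilon> > 0" unfolding \<epsilon>_def using r pd by (intro divide_pos_pos) auto
    obtain \<delta> where \<delta>: "\<delta> > 0" "\<And>y. norm (y - xb) < \<delta> \<Longrightarrow> norm (g y - g xb - A (y - xb)) \<le> \<epsilon> * norm (y - xb)"
      using gd e unfolding has_derivative_within_alt by blast
    have "(\<lambda>k. norm (t k *\<^sub>R ws k)) \<longlonglongrightarrow> norm (0 *\<^sub>R d)" by (intro tendsto_intros t0 ws)
    then have ev1: "eventually (\<lambda>k. norm (t k *\<^sub>R ws k) < \<delta>) sequentially"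
      using \<delta> by (auto dest: order_tendstoD(2))
    have "(\<lambda>k. norm (ws k)) \<longlonglongrightarrow> norm d" by (intro tendsto_intros ws)
    then have ev2: "eventually (\<lambda>k. norm (ws k) < norm d + 1) sequentially"
      by (rule order_tendstoD(2)) simp
    have "eventually (\<lambda>k. norm ((g (xb + t k *\<^sub>R ws k) - g xb) /\<^sub>R t k - A (ws k) - 0) < r) sequentially"
      using ev1 ev2
    proof eventually_elim
      case (elim k)
      have tk: "t k > 0" by (rule tpos)
      have "(g (xb + t k *\<^sub>R ws k) - g xb) /\<^sub>R t k - A (ws k)
            = (g (xb + t k *\<^sub>R ws k) - g xb - A ((xb + t k *\<^sub>R ws k) - xb)) /\<^sub>R t k"
        using tk by (simp add: linear_scale[OF bounded_linear.linear[OF blA]] scaleR_diff_right)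
      then have "norm ((g (xb + t k *\<^sub>R ws k) - g xb) /\<^sub>R t k - A (ws k))
            = norm (g (xb + t k *\<^sub>R ws k) - g xb - A ((xb + t k *\<^sub>R ws k) - xb)) / t k"
        using tk by (simp add: divide_inverse_commute)
      also have "\<dots> \<le> \<epsilon> * norm (t k *\<^sub>R ws k) / t k"
        using \<delta>(2)[of "xb + t k *\<^sub>R ws k"] elim tk by (intro divide_right_mono) auto
      also have "\<dots> = \<epsilon> * norm (ws k)" using tk by simp
      also have "\<dots> \<le> \<epsilon> * (norm d + 1)" using elim e by (intro mult_left_mono) auto
      also have "\<dots> = r / 2" unfolding \<epsilon>_def using pd by (simp add: field_simps)
      also have "\<dots> < r" using r by simp
      finally show ?case by simp
    qed
    then show "\<exists>no. \<forall>n\<ge>no. norm ((g (xb + t n *\<^sub>R ws n) - g xb) /\<^sub>R t n - A (ws n) - 0) < r"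
      by (simp add: eventually_sequentially)
  qed
  moreover have "(\<lambda>k. A (ws k)) \<longlonglongrightarrow> A d" by (intro bounded_linear.tendsto[OF blA] ws)
  ultimately have "(\<lambda>k. ((g (xb + t k *\<^sub>R ws k) - g xb) /\<^sub>R t k - A (ws k)) + A (ws k)) \<longlonglongrightarrow> 0 + A d"
    by (intro tendsto_add)
  then show ?thesis by simp
qed



lemma uniq_mult:
  fixes df :: "'a::euclidean_space \<Rightarrow> 'a" and g :: "'a \<Rightarrow> 'b::euclidean_space"
    and dg :: "'a \<Rightarrow> 'a \<Rightarrow>\<^sub>L 'b"
  assumes cT: "convex \<Theta>"
    and yb_normal: "yb \<in> limiting_normal \<Theta> (g xb)"
    and KKT: "df xb + adjoint (blinfun_apply (dg xb)) yb = 0"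
    and SOCQ: "coderiv_normal \<Theta> (g xb) yb 0 \<inter> {y. adjoint (blinfun_apply (dg xb)) y = 0} = {0}"
    and y: "y \<in> limiting_normal \<Theta> (g xb)" and KKTy: "df xb + adjoint (blinfun_apply (dg xb)) y = 0"
  shows "y = yb"
proof -
  have lA: "linear (blinfun_apply (dg xb))" by (rule bounded_linear.linear[OF blinfun.bounded_linear_right])
  have "y - yb \<in> coderiv_normal \<Theta> (g xb) yb 0" by (rule diff_in_coderiv[OF cT yb_normal y yb_normal])
  moreover have "adjoint (blinfun_apply (dg xb)) (y - yb) = 0"
    using KKT KKTy linear_diff[OF adjoint_linear[OF lA]] by (metis add_left_imp_eq diff_self)
  ultimately have "y - yb \<in> {0}" using SOCQ by blast
  then show ?thesis by simp
qed



lemma sec: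
  fixes f :: "'a::euclidean_space \<Rightarrow> real"
    and df :: "'a \<Rightarrow> 'a"
    and g :: "'a \<Rightarrow> 'b::euclidean_space"
    and dg :: "'a \<Rightarrow> 'a \<Rightarrow>\<^sub>L 'b"
    and ddg :: "'a \<Rightarrow> 'a \<Rightarrow>\<^sub>L ('a \<Rightarrow>\<^sub>L 'b)"
    and \<Theta> :: "'b set"
  assumes poly: "polyhedron \<Theta>"
    and feas: "g xb \<in> \<Theta>"
    and U: "open U" "xb \<in> U"
    and f_deriv: "\<forall>x\<in>U. (f has_derivative (\<lambda>h. df x \<bullet> h)) (at x)"
    and df_lip: "\<exists>L. \<forall>x\<in>U. \<forall>x'\<in>U. norm (df x - df x') \<le> L * dist x x'"
    and V: "open V" "xb \<in> V"
    and g_deriv: "\<forall>x\<in>V. (g has_derivative blinfun_apply (dg x)) (at x)"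
    and dg_deriv: "\<forall>x\<in>V. (dg has_derivative blinfun_apply (ddg x)) (at x)"
    and yb_normal: "yb \<in> limiting_normal \<Theta> (g xb)"
    and KKT: "df xb + adjoint (blinfun_apply (dg xb)) yb = 0"
    and SOCQ: "coderiv_normal \<Theta> (g xb) yb 0 \<inter> {y. adjoint (blinfun_apply (dg xb)) y = 0} = {0}"
    and grow0: "\<exists>\<delta>>0. \<forall>x. g x \<in> \<Theta> \<and> dist x xb < \<delta> \<longrightarrow> f x \<ge> f xb + \<sigma> / 2 * (norm (x - xb))\<^sup>2"
    and wc: "- w \<in> critical_cone {x. g x \<in> \<Theta>} xb (- df xb)"
    and zc: "z \<in> breve_subdiff2 U df xb w"
  shows "z \<bullet> w + yb \<bullet> (ddg xb w w) \<ge> \<sigma> * (norm w)\<^sup>2"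
proof -
  have cT: "convex \<Theta>" by (rule polyhedron_imp_convex[OF poly])
  define A where "A = blinfun_apply (dg xb)"
  have lA: "linear A" unfolding A_def by (rule bounded_linear.linear[OF blinfun.bounded_linear_right])
  define C where "C = limiting_normal \<Theta> (g xb)"
  have cq: "y = 0" if yh: "y \<in> span C" "adjoint A y = 0" for y
  proof -
    obtain y1 y2 where "y1 \<in> C" "y2 \<in> C" "y = y1 - y2"
      using span_limn[OF cT feas yh(1)[unfolded C_def]] unfolding C_def by blast
    then have "y \<in> coderiv_normal \<Theta> (g xb) yb 0"
      using diff_in_coderiv[OF cT yb_normal] unfolding C_def by blast
    then show ?thesis using yh(2) SOCQ unfolding A_def by blast
  qed
  obtain B1 :: "'b \<Rightarrow> 'a" and B2 :: "'b \<Rightarrow> 'b" where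
    lB1: "linear B1" and lB2: "linear B2" and inv: "\<And>q. A (B1 q) - B2 q = q"
    and orth: "\<And>q y. y \<in> C \<Longrightarrow> y \<bullet> B2 q = 0"
    using cq_rinv[OF lA cq] by blast
  have KKT': "df xb \<bullet> h + yb \<bullet> dg xb h = 0" for h
  proof -
    have "(df xb + adjoint A yb) \<bullet> h = 0" using KKT by (simp add: A_def)
    then show ?thesis using adjoint_clauses(2)[OF lA, of yb h] by (simp add: inner_add_left A_def)
  qed
  obtain L0 where L0: "\<forall>x\<in>U. \<forall>x'\<in>U. norm (df x - df x') \<le> L0 * dist x x'" using df_lip by blast
  define L where "L = max L0 0"
  have L: "L \<ge> 0" by (simp add: L_def)
  have Lip: "norm (df x - df x') \<le> L * dist x x'" if "x \<in> U" "x' \<in> U" for x x'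
  proof -
    have "L0 * dist x x' \<le> L * dist x x'" by (intro mult_right_mono) (auto simp: L_def)
    then show ?thesis using L0 that by fastforce
  qed
  define d where "d = - w"
  obtain tt ws where tw: "\<forall>k. tt k > 0 \<and> xb + tt k *\<^sub>R ws k \<in> {x. g x \<in> \<Theta>}" "tt \<longlonglongrightarrow> 0" "ws \<longlonglongrightarrow> d"
    using wc unfolding critical_cone_def tangent_cone_def d_def by blast
  have dfw: "df xb \<bullet> d = 0" using wc unfolding critical_cone_def d_def by simp
  define e where "e = A d"
  have gd: "(g has_derivative A) (at xb)" using g_deriv V(2) by (simp add: A_def)
  have ye: "yb \<bullet> e = 0"
  proof -
    have "yb \<bullet> e = adjoint A yb \<bullet> d" by (simp add: e_def adjoint_clauses(2)[OF lA])
    also have "\<dots> = - (df xb \<bullet> d)" using KKT by (simp add: A_def eq_neg_iff_add_eq_0[symmetric])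
    finally show ?thesis using dfw by simp
  qed
  have active: "a \<bullet> e \<le> 0" if "\<Theta> \<subseteq> {x. a \<bullet> x \<le> b}" "a \<bullet> g xb = b" for a b
  proof -
    have "(\<lambda>k. a \<bullet> ((g (xb + tt k *\<^sub>R ws k) - g xb) /\<^sub>R tt k)) \<longlonglongrightarrow> a \<bullet> e"
      unfolding e_def by (intro tendsto_intros seq_deriv[OF gd] tw) (use tw in auto)
    moreover have "a \<bullet> ((g (xb + tt k *\<^sub>R ws k) - g xb) /\<^sub>R tt k) \<le> 0" for k
    proof -
      have "a \<bullet> g (xb + tt k *\<^sub>R ws k) \<le> b" using tw(1) that(1) by blast
      then have "a \<bullet> (g (xb + tt k *\<^sub>R ws k) - g xb) \<le> 0" using that(2) by (simp add: inner_diff_right)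
      moreover have "inverse (tt k) \<ge> 0" using tw(1) by (simp add: less_imp_le)
      ultimately show ?thesis by (simp add: mult_nonneg_nonpos)
    qed
    ultimately show ?thesis by (meson LIMSEQ_le_const2)
  qed
  obtain r0 where r0: "r0 > 0" "ball xb r0 \<subseteq> V" using V open_contains_ball by blast
  have gc: "continuous_on (ball xb r0) g"
    using r0 g_deriv by (intro continuous_at_imp_continuous_on) (auto dest: has_derivative_continuous)
  have gcx: "isCont g xb" using gd by (rule has_derivative_continuous)
  have "\<forall>n. \<exists>p. fst p > 0 \<and> fst p \<le> 1 / real (Suc n) \<and> norm (fst (snd p)) \<le> (1 / real (Suc n)) * fst p
          \<and> g (xb + fst p *\<^sub>R d + fst (snd p)) - g xb - fst p *\<^sub>R e = B2 (snd (snd p))"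
  proof
    fix n
    obtain \<tau> where \<tau>: "\<tau> > 0" "\<forall>t. 0 < t \<and> t < \<tau> \<longrightarrow> (\<exists>r q. norm r \<le> (1 / real (Suc n)) * t \<and>
        g (xb + t *\<^sub>R d + r) - g xb - t *\<^sub>R A d = B2 q)"
      using arc_lemma[OF gd r0(1) gc lB1 lB2 inv, of "1 / real (Suc n)" d] by auto
    define t where "t = min (\<tau> / 2) (1 / real (Suc n))"
    have t: "t > 0" "t < \<tau>" "t \<le> 1 / real (Suc n)" using \<tau> by (auto simp: t_def)
    then obtain r q where "norm r \<le> (1 / real (Suc n)) * t" "g (xb + t *\<^sub>R d + r) - g xb - t *\<^sub>R A d = B2 q"
      using \<tau> by blast
    then show "\<exists>p. fst p > 0 \<and> fst p \<le> 1 / real (Suc n) \<and> norm (fst (snd p)) \<le> (1 / real (Suc n)) * fst p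
          \<and> g (xb + fst p *\<^sub>R d + fst (snd p)) - g xb - fst p *\<^sub>R e = B2 (snd (snd p))"
      using t by (intro exI[of _ "(t, r, q)"]) (simp add: e_def)
  qed
  then obtain P where P: "\<And>n. fst (P n) > 0 \<and> fst (P n) \<le> 1 / real (Suc n) \<and> norm (fst (snd (P n))) \<le> (1 / real (Suc n)) * fst (P n)
          \<and> g (xb + fst (P n) *\<^sub>R d + fst (snd (P n))) - g xb - fst (P n) *\<^sub>R e = B2 (snd (snd (P n)))"
    by metis
  define T where "T = (\<lambda>n. fst (P n))"
  define R where "R = (\<lambda>n. fst (snd (P n)))"
  define Qq where "Qq = (\<lambda>n. snd (snd (P n)))"
  have T: "\<And>n. T n > 0" "\<And>n. T n \<le> 1 / real (Suc n)" using P by (auto simp: T_def)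
  have Rn: "\<And>n. norm (R n) \<le> (1 / real (Suc n)) * T n" using P by (auto simp: T_def R_def)
  have gR: "\<And>n. g (xb + T n *\<^sub>R d + R n) = g xb + T n *\<^sub>R e + B2 (Qq n)"
    using P by (auto simp: T_def R_def Qq_def algebra_simps)
  define ds where "ds = (\<lambda>n. d + (1 / T n) *\<^sub>R R n)"
  have xe: "xb + T n *\<^sub>R ds n = xb + T n *\<^sub>R d + R n" for n
    using T(1)[of n] by (simp add: ds_def scaleR_add_right)
  have lim0: "(\<lambda>n. 1 / real (Suc n)) \<longlonglongrightarrow> 0"
    by (rule LIMSEQ_inverse_real_of_nat[unfolded inverse_eq_divide])
  have T0: "T \<longlonglongrightarrow> 0"
    by (rule tendsto_sandwich[of "\<lambda>_. 0" _ _ "\<lambda>n. 1 / real (Suc n)"]) (use T lim0 in \<open>auto intro!: always_eventually less_imp_le\<close>)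
  have "(\<lambda>n. norm ((1 / T n) *\<^sub>R R n)) \<longlonglongrightarrow> 0"
  proof (rule tendsto_sandwich[of "\<lambda>_. 0" _ _ "\<lambda>n. 1 / real (Suc n)"])
    show "\<forall>\<^sub>F n in sequentially. norm ((1 / T n) *\<^sub>R R n) \<le> 1 / real (Suc n)"
    proof (intro always_eventually allI)
      fix n
      have "norm ((1 / T n) *\<^sub>R R n) = norm (R n) / T n" using T(1)[of n] by simp
      also have "\<dots> \<le> 1 / real (Suc n)" using Rn[of n] T(1)[of n] by (simp add: divide_le_eq)
      finally show "norm ((1 / T n) *\<^sub>R R n) \<le> 1 / real (Suc n)" .
    qed
  qed (use lim0 in auto)
  then have "(\<lambda>n. (1 / T n) *\<^sub>R R n) \<longlonglongrightarrow> 0" by (rule tendsto_norm_zero_cancel)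
  then have dsl: "ds \<longlonglongrightarrow> d" unfolding ds_def using tendsto_add[of "\<lambda>_. d" d sequentially] by fastforce
  have xl: "(\<lambda>n. xb + T n *\<^sub>R ds n) \<longlonglongrightarrow> xb + 0 *\<^sub>R d" by (intro tendsto_intros T0 dsl)
  then have xl': "(\<lambda>n. xb + T n *\<^sub>R ds n) \<longlonglongrightarrow> xb" by simp
  have gl: "(\<lambda>n. g (xb + T n *\<^sub>R ds n)) \<longlonglongrightarrow> g xb" by (rule isCont_tendsto_compose[OF gcx xl'])
  have gx: "g (xb + T n *\<^sub>R ds n) = g xb + T n *\<^sub>R e + B2 (Qq n)" for n by (simp add: xe gR)
  have ybC: "yb \<in> C" using yb_normal by (simp add: C_def)
  have yg: "yb \<bullet> g (xb + T n *\<^sub>R ds n) = yb \<bullet> g xb" for n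
    using orth[OF ybC] ye by (simp add: gx inner_add_right)
  obtain F where F: "finite F" "\<Theta> = \<Inter> F" "\<forall>h\<in>F. \<exists>a b. a \<noteq> 0 \<and> h = {x. a \<bullet> x \<le> b}"
    using poly unfolding polyhedron_def by blast
  have evH: "eventually (\<lambda>n. g (xb + T n *\<^sub>R ds n) \<in> H) sequentially" if H: "H \<in> F" for H
  proof -
    obtain a b where ab: "H = {x. a \<bullet> x \<le> b}" using F(3) H by blast
    have sub: "\<Theta> \<subseteq> {x. a \<bullet> x \<le> b}" using F(2) H ab by blast
    have ab0: "a \<bullet> g xb \<le> b" using sub feas by blast
    show ?thesis
    proof (cases "a \<bullet> g xb = b")
      case True
      have aC: "a \<in> C"
      proof -
        have "\<forall>z\<in>\<Theta>. a \<bullet> (z - g xb) \<le> 0" using sub True by (auto simp: inner_diff_right)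
        then show ?thesis using limn_iff[OF cT] feas by (simp add: C_def)
      qed
      have "g (xb + T n *\<^sub>R ds n) \<in> H" for n
      proof -
        have "a \<bullet> g (xb + T n *\<^sub>R ds n) = b + T n * (a \<bullet> e)"
          using orth[OF aC] True by (simp add: gx inner_add_right)
        also have "\<dots> \<le> b" using active[OF sub True] T(1)[of n] by (simp add: mult_nonneg_nonpos)
        finally show ?thesis by (simp add: ab)
      qed
      then show ?thesis by simp
    next
      case False
      then have lt: "a \<bullet> g xb < b" using ab0 by simp
      have "(\<lambda>n. a \<bullet> g (xb + T n *\<^sub>R ds n)) \<longlonglongrightarrow> a \<bullet> g xb" by (intro tendsto_intros gl)
      then have "eventually (\<lambda>n. a \<bullet> g (xb + T n *\<^sub>R ds n) < b) sequentially"
        using lt by (rule order_tendstoD(2))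
      then show ?thesis by eventually_elim (simp add: ab)
    qed
  qed
  have evT: "eventually (\<lambda>n. g (xb + T n *\<^sub>R ds n) \<in> \<Theta>) sequentially"
  proof -
    have "eventually (\<lambda>n. \<forall>H\<in>F. g (xb + T n *\<^sub>R ds n) \<in> H) sequentially"
      using evH F(1) by (simp add: eventually_ball_finite)
    then show ?thesis by eventually_elim (simp add: F(2))
  qed
  obtain \<delta> where \<delta>: "\<delta> > 0" "\<forall>x. g x \<in> \<Theta> \<and> dist x xb < \<delta> \<longrightarrow> f x \<ge> f xb + \<sigma> / 2 * (norm (x - xb))\<^sup>2"
    using grow0 by blast
  have "(\<lambda>n. dist (xb + T n *\<^sub>R ds n) xb) \<longlonglongrightarrow> dist xb xb" by (intro tendsto_intros xl')
  then have evd: "eventually (\<lambda>n. dist (xb + T n *\<^sub>R ds n) xb < \<delta>) sequentially"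
    using \<delta> by (auto dest: order_tendstoD(2))
  have grow: "eventually (\<lambda>k. f (xb + T k *\<^sub>R ds k) + yb \<bullet> g (xb + T k *\<^sub>R ds k) - f xb - yb \<bullet> g xb
                   \<ge> \<sigma> / 2 * (T k)^2 * (norm (ds k))^2) sequentially"
    using evT evd
  proof eventually_elim
    case (elim k)
    have "f (xb + T k *\<^sub>R ds k) \<ge> f xb + \<sigma> / 2 * (norm ((xb + T k *\<^sub>R ds k) - xb))\<^sup>2"
      using \<delta>(2) elim by blast
    moreover have "(norm ((xb + T k *\<^sub>R ds k) - xb))\<^sup>2 = (T k)^2 * (norm (ds k))^2"
      using T(1)[of k] by (simp add: power_mult_distrib)
    ultimately show ?case using yg[of k] by simp
  qed
  have dsw: "ds \<longlonglongrightarrow> - w" using dsl by (simp add: d_def)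
  have zc': "(z, - w) \<in> regular_normal {(x, df x) | x. x \<in> U} (xb, df xb)"
    using zc by (simp add: breve_subdiff2_def)
  have dgd: "(dg has_derivative blinfun_apply (ddg xb)) (at xb)" using dg_deriv V(2) by blast
  show ?thesis
    using so_core[where f=f and df=df and g=g and dg=dg and ddg=ddg and xb=xb and yb=yb and t=T and ds=ds and U=U and V=V and L=L and z=z and w=w and \<sigma>=\<sigma>, OF U f_deriv Lip L V g_deriv dgd KKT' zc' T(1) T0 dsw grow] by simp
qed


theorem corollary7p4:
  fixes f :: "'a::euclidean_space \<Rightarrow> real"
    and df :: "'a \<Rightarrow> 'a"
    and g :: "'a \<Rightarrow> 'b::euclidean_space"
    and dg :: "'a \<Rightarrow> 'a \<Rightarrow>\<^sub>L 'b"
    and ddg :: "'a \<Rightarrow> 'a \<Rightarrow>\<^sub>L ('a \<Rightarrow>\<^sub>L 'b)"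
    and \<Theta> :: "'b set"
    and U V :: "'a set"
    and xb :: 'a and yb :: 'b
  assumes poly: "polyhedron \<Theta>" and nonempty: "\<Theta> \<noteq> {}"
    and feas: "g xb \<in> \<Theta>"
    \<comment> \<open>f is C^{1,1} around xb, with gradient df\<close>
    and U: "open U" "xb \<in> U"
    and f_deriv: "\<forall>x\<in>U. (f has_derivative (\<lambda>h. df x \<bullet> h)) (at x)"
    and df_lip: "\<exists>L. \<forall>x\<in>U. \<forall>x'\<in>U. norm (df x - df x') \<le> L * dist x x'"
    \<comment> \<open>g is C^2 around xb, with derivative dg and second derivative ddg\<close>
    and V: "open V" "xb \<in> V"
    and g_deriv: "\<forall>x\<in>V. (g has_derivative blinfun_apply (dg x)) (at x)"
    and dg_deriv: "\<forall>x\<in>V. (dg has_derivative blinfun_apply (ddg x)) (at x)"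
    and ddg_cont: "continuous_on V ddg"
    \<comment> \<open>SOCQ at xb with multiplier yb\<close>
    and yb_normal: "yb \<in> limiting_normal \<Theta> (g xb)"
    and KKT: "df xb + adjoint (blinfun_apply (dg xb)) yb = 0"
    and SOCQ: "coderiv_normal \<Theta> (g xb) yb 0 \<inter> {y. adjoint (blinfun_apply (dg xb)) y = 0} = {0}"
  shows
    "((\<exists>\<delta>>0. \<forall>x. g x \<in> \<Theta> \<and> dist x xb < \<delta> \<longrightarrow> f xb \<le> f x) \<longrightarrow>
        (\<forall>y. y \<in> limiting_normal \<Theta> (g xb) \<and> df xb + adjoint (blinfun_apply (dg xb)) y = 0
              \<longrightarrow> y = yb) \<and>
        (\<forall>w z. - w \<in> critical_cone {x. g x \<in> \<Theta>} xb (- df xb) \<and> z \<in> breve_subdiff2 U df xb w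
              \<longrightarrow> z \<bullet> w + yb \<bullet> (ddg xb w w) \<ge> 0))
     \<and>
     (\<forall>\<sigma>>0. (\<exists>\<delta>>0. \<forall>x. g x \<in> \<Theta> \<and> dist x xb < \<delta> \<longrightarrow>
                 f x \<ge> f xb + \<sigma> / 2 * (norm (x - xb))\<^sup>2) \<longrightarrow>
        (\<forall>y. y \<in> limiting_normal \<Theta> (g xb) \<and> df xb + adjoint (blinfun_apply (dg xb)) y = 0
              \<longrightarrow> y = yb) \<and>
        (\<forall>w z. - w \<in> critical_cone {x. g x \<in> \<Theta>} xb (- df xb) \<and> z \<in> breve_subdiff2 U df xb w
              \<longrightarrow> z \<bullet> w + yb \<bullet> (ddg xb w w) \<ge> \<sigma> * (norm w)\<^sup>2))"
  proof -
  have cT: "convex \<Theta>" by (rule polyhedron_imp_convex[OF poly])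
  have uq: "\<forall>y. y \<in> limiting_normal \<Theta> (g xb) \<and> df xb + adjoint (blinfun_apply (dg xb)) y = 0 \<longrightarrow> y = yb"
    using uniq_mult[where g=g and xb=xb and df=df and dg=dg, OF cT yb_normal KKT SOCQ] by blast
  have part1: "(\<exists>\<delta>>0. \<forall>x. g x \<in> \<Theta> \<and> dist x xb < \<delta> \<longrightarrow> f xb \<le> f x) \<longrightarrow>
        (\<forall>y. y \<in> limiting_normal \<Theta> (g xb) \<and> df xb + adjoint (blinfun_apply (dg xb)) y = 0
              \<longrightarrow> y = yb) \<and>
        (\<forall>w z. - w \<in> critical_cone {x. g x \<in> \<Theta>} xb (- df xb) \<and> z \<in> breve_subdiff2 U df xb w
              \<longrightarrow> z \<bullet> w + yb \<bullet> (ddg xb w w) \<ge> 0)"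
  proof (rule impI, rule conjI[OF uq], intro allI impI)
    assume m: "\<exists>\<delta>>0. \<forall>x. g x \<in> \<Theta> \<and> dist x xb < \<delta> \<longrightarrow> f xb \<le> f x"
    have g0: "\<exists>\<delta>>0. \<forall>x. g x \<in> \<Theta> \<and> dist x xb < \<delta> \<longrightarrow> f x \<ge> f xb + 0 / 2 * (norm (x - xb))\<^sup>2"
      using m by simp
    fix w z
    assume wz: "- w \<in> critical_cone {x. g x \<in> \<Theta>} xb (- df xb) \<and> z \<in> breve_subdiff2 U df xb w"
    have "z \<bullet> w + yb \<bullet> (ddg xb w w) \<ge> 0 * (norm w)\<^sup>2"
      using wz by (intro sec[where f=f and df=df and g=g and dg=dg and ddg=ddg and xb=xb and yb=yb and U=U and V=V, OF poly feas U f_deriv df_lip V g_deriv dg_deriv yb_normal KKT SOCQ g0]) auto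
    then show "z \<bullet> w + yb \<bullet> (ddg xb w w) \<ge> 0" by simp
  qed
  have part2: "\<forall>\<sigma>>0. (\<exists>\<delta>>0. \<forall>x. g x \<in> \<Theta> \<and> dist x xb < \<delta> \<longrightarrow>
                 f x \<ge> f xb + \<sigma> / 2 * (norm (x - xb))\<^sup>2) \<longrightarrow>
        (\<forall>y. y \<in> limiting_normal \<Theta> (g xb) \<and> df xb + adjoint (blinfun_apply (dg xb)) y = 0
              \<longrightarrow> y = yb) \<and>
        (\<forall>w z. - w \<in> critical_cone {x. g x \<in> \<Theta>} xb (- df xb) \<and> z \<in> breve_subdiff2 U df xb w
              \<longrightarrow> z \<bullet> w + yb \<bullet> (ddg xb w w) \<ge> \<sigma> * (norm w)\<^sup>2)"
  proof (rule allI, rule impI, rule impI, rule conjI[OF uq], intro allI impI)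
    fix \<sigma> :: real
    assume "\<sigma> > 0"
    assume m: "\<exists>\<delta>>0. \<forall>x. g x \<in> \<Theta> \<and> dist x xb < \<delta> \<longrightarrow> f x \<ge> f xb + \<sigma> / 2 * (norm (x - xb))\<^sup>2"
    fix w z
    assume wz: "- w \<in> critical_cone {x. g x \<in> \<Theta>} xb (- df xb) \<and> z \<in> breve_subdiff2 U df xb w"
    show "z \<bullet> w + yb \<bullet> (ddg xb w w) \<ge> \<sigma> * (norm w)\<^sup>2"
      using wz by (intro sec[where f=f and df=df and g=g and dg=dg and ddg=ddg and xb=xb and yb=yb and U=U and V=V, OF poly feas U f_deriv df_lip V g_deriv dg_deriv yb_normal KKT SOCQ m]) auto
  qed
  show ?thesis using part1 part2 by blast
qed

end
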